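(* Let $\mathcal I$ be a co-analytic ideal on $\omega$ and $F:\omega^\omega\to\mathcal I^+$ a continuous surjection. Then the games $\mathcal H_{\mathsf{Cat}}(\mathcal I,F)$ and $\mathcal G_{\mathsf{Cat}}(\mathcal I)$ are determined.
   Context: $\mathcal P(\omega)$ is identified with $2^\omega$; $\mathcal I$ is co-analytic as a subset of it, and $\mathcal I^+=\mathcal P(\omega)\setminus\mathcal I$. The game $\mathcal G_{\mathsf{Cat}}(\mathcal I)$: in round $n\in\omega$ Player I plays $A_n\in\mathcal I$ and Player II plays $b_n\in\omega\setminus A_n$; II wins iff $\{b_n:n\in\omega\}\in\mathcal I^+$. Let $R$ be the set of functions $f:\omega\to\omega\cup\{-1\}$ with $f(n)<n$ for all $n$ and $\{n:f(n)\ne-1\}$ infinite; for $f\in R$, enumerating $\{n:f(n)\ne-1\}=\{n_i:i\in\omega\}$ increasingly, let $\tilde f(i)=f(n_i)$. The game $\mathcal H_{\mathsf{Cat}}(\mathcal I,F)$: in round $n$ Player I plays $A_n\in\mathcal I$ and Player II plays a pair $(b_n,m_n)$ with $b_n\in\omega\setminus A_n$ and $m_n\in n\cup\{-1\}$; letting $g(n)=m_n$, Player II wins iff $\{n:m_n\ne-1\}$ is infinite and $F(\tilde g)=\{b_n:n\in\omega\}$. A game is determined if one of the players has a winning strategy. *)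

theory Defs
  imports "HOL-Analysis.Analysis" "HOL-Library.Infinite_Set"
begin

text \<open>P(omega) is identified with the Cantor space 2^omega: a set S of naturals is
  identified with its 0/1-valued characteristic sequence, viewed inside the Baire space
  nat => nat (product topology of discrete nat); the subspace of 0/1 sequences is the
  Cantor space with its product topology.\<close>

definition chi :: "nat set \<Rightarrow> (nat \<Rightarrow> nat)" where
  "chi S = (\<lambda>n. if n \<in> S then 1 else 0)"

definition cont_into_P :: "((nat \<Rightarrow> nat) \<Rightarrow> nat set) \<Rightarrow> bool" where
  "cont_into_P F \<longleftrightarrow> continuous_on UNIV (\<lambda>x. chi (F x))"

definition analytic_P :: "nat set set \<Rightarrow> bool" where
  "analytic_P A \<longleftrightarrow> A = {} \<or> (\<exists>f. cont_into_P f \<and> range f = A)"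

definition coanalytic_P :: "nat set set \<Rightarrow> bool" where
  "coanalytic_P A \<longleftrightarrow> analytic_P (UNIV - A)"

definition ideal_on_omega :: "nat set set \<Rightarrow> bool" where
  "ideal_on_omega I \<longleftrightarrow>
     (\<forall>A B. A \<in> I \<longrightarrow> B \<subseteq> A \<longrightarrow> B \<in> I) \<and>
     (\<forall>A B. A \<in> I \<longrightarrow> B \<in> I \<longrightarrow> A \<union> B \<in> I) \<and>
     (\<forall>A. finite A \<longrightarrow> A \<in> I) \<and>
     UNIV \<notin> I"

definition Iplus :: "nat set set \<Rightarrow> nat set set" where
  "Iplus I = UNIV - I"

definition pref :: "(nat \<Rightarrow> 'a) \<Rightarrow> nat \<Rightarrow> 'a list" where
  "pref s n = map s [0..<n]"

text \<open>A strategy for Player I maps the list of Player II's previous moves [b_0,...,b_{n-1}]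
  to A_n, which must lie in I.  A strategy for Player II maps the list of Player I's moves
  [A_0,...,A_n] to b_n, which must avoid A_n whenever all A_i are legal (in I).\<close>

definition G_I_strategy :: "nat set set \<Rightarrow> (nat list \<Rightarrow> nat set) \<Rightarrow> bool" where
  "G_I_strategy I \<sigma> \<longleftrightarrow> (\<forall>s. \<sigma> s \<in> I)"

definition G_I_winning :: "nat set set \<Rightarrow> (nat list \<Rightarrow> nat set) \<Rightarrow> bool" where
  "G_I_winning I \<sigma> \<longleftrightarrow> G_I_strategy I \<sigma> \<and>
     (\<forall>b::nat \<Rightarrow> nat. (\<forall>n. b n \<notin> \<sigma> (pref b n)) \<longrightarrow> range b \<notin> Iplus I)"

definition G_II_strategy :: "nat set set \<Rightarrow> (nat set list \<Rightarrow> nat) \<Rightarrow> bool" where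
  "G_II_strategy I \<tau> \<longleftrightarrow>
     (\<forall>As. As \<noteq> [] \<longrightarrow> set As \<subseteq> I \<longrightarrow> \<tau> As \<notin> last As)"

definition G_II_winning :: "nat set set \<Rightarrow> (nat set list \<Rightarrow> nat) \<Rightarrow> bool" where
  "G_II_winning I \<tau> \<longleftrightarrow> G_II_strategy I \<tau> \<and>
     (\<forall>A::nat \<Rightarrow> nat set. (\<forall>n. A n \<in> I) \<longrightarrow>
        range (\<lambda>n. \<tau> (pref A (Suc n))) \<in> Iplus I)"

definition G_Cat_determined :: "nat set set \<Rightarrow> bool" where
  "G_Cat_determined I \<longleftrightarrow> (\<exists>\<sigma>. G_I_winning I \<sigma>) \<or> (\<exists>\<tau>. G_II_winning I \<tau>)"

text \<open>For g : omega -> omega \<union> {-1} (encoded as int-valued) with infinitely many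
  non-(-1) values, tilde g enumerates the values g(n_i) where n_0 < n_1 < ... enumerate
  {n. g n \<noteq> -1}.\<close>
definition tilde :: "(nat \<Rightarrow> int) \<Rightarrow> nat \<Rightarrow> nat" where
  "tilde g i = nat (g (enumerate {n. g n \<noteq> -1} i))"

definition H_legal :: "nat set \<Rightarrow> nat \<Rightarrow> nat \<times> int \<Rightarrow> bool" where
  "H_legal A n bm \<longleftrightarrow> fst bm \<notin> A \<and> -1 \<le> snd bm \<and> snd bm < int n"

definition H_II_wins :: "((nat \<Rightarrow> nat) \<Rightarrow> nat set) \<Rightarrow> (nat \<Rightarrow> nat \<times> int) \<Rightarrow> bool" where
  "H_II_wins F bm \<longleftrightarrow>
     infinite {n. snd (bm n) \<noteq> -1} \<and>
     F (tilde (\<lambda>n. snd (bm n))) = range (\<lambda>n. fst (bm n))"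

definition H_I_strategy :: "nat set set \<Rightarrow> ((nat \<times> int) list \<Rightarrow> nat set) \<Rightarrow> bool" where
  "H_I_strategy I \<sigma> \<longleftrightarrow> (\<forall>s. \<sigma> s \<in> I)"

definition H_I_winning ::
  "nat set set \<Rightarrow> ((nat \<Rightarrow> nat) \<Rightarrow> nat set) \<Rightarrow> ((nat \<times> int) list \<Rightarrow> nat set) \<Rightarrow> bool" where
  "H_I_winning I F \<sigma> \<longleftrightarrow> H_I_strategy I \<sigma> \<and>
     (\<forall>bm::nat \<Rightarrow> nat \<times> int. (\<forall>n. H_legal (\<sigma> (pref bm n)) n (bm n)) \<longrightarrow> \<not> H_II_wins F bm)"

definition H_II_strategy :: "nat set set \<Rightarrow> (nat set list \<Rightarrow> nat \<times> int) \<Rightarrow> bool" where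
  "H_II_strategy I \<tau> \<longleftrightarrow>
     (\<forall>As. As \<noteq> [] \<longrightarrow> set As \<subseteq> I \<longrightarrow> H_legal (last As) (length As - 1) (\<tau> As))"

definition H_II_winning ::
  "nat set set \<Rightarrow> ((nat \<Rightarrow> nat) \<Rightarrow> nat set) \<Rightarrow> (nat set list \<Rightarrow> nat \<times> int) \<Rightarrow> bool" where
  "H_II_winning I F \<tau> \<longleftrightarrow> H_II_strategy I \<tau> \<and>
     (\<forall>A::nat \<Rightarrow> nat set. (\<forall>n. A n \<in> I) \<longrightarrow> H_II_wins F (\<lambda>n. \<tau> (pref A (Suc n))))"

definition H_Cat_determined :: "nat set set \<Rightarrow> ((nat \<Rightarrow> nat) \<Rightarrow> nat set) \<Rightarrow> bool" where
  "H_Cat_determined I F \<longleftrightarrow> (\<exists>\<sigma>. H_I_winning I F \<sigma>) \<or> (\<exists>\<tau>. H_II_winning I F \<tau>)"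

end

theory Submission
  imports Defs
begin

lemma pref_Suc: "pref p (Suc n) = pref p n @ [p n]" by (simp add: pref_def)
lemma length_pref[simp]: "length (pref p n) = n" by (simp add: pref_def)
lemma nth_pref[simp]: "i < n \<Longrightarrow> pref p n ! i = p i" by (simp add: pref_def)
lemma take_pref[simp]: "k \<le> n \<Longrightarrow> take k (pref p n) = pref p k" by (simp add: pref_def take_map)
lemma pref_0[simp]: "pref p 0 = []" by (simp add: pref_def)

fun stl :: "(nat \<Rightarrow> 'c list set) \<Rightarrow> 'c list \<Rightarrow> nat \<Rightarrow> nat \<times> nat" where
  "stl T h 0 = (0,0)"
| "stl T h (Suc K) = (case stl T h K of (n,j) \<Rightarrow>
      if \<exists>i\<le>Suc K. take i h \<notin> T n then (Suc n, Suc K) else (n,j))"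

lemma stl_cong: "(\<forall>i\<le>K. take i h = take i h') \<Longrightarrow> stl T h K = stl T h' K"
  by (induction K) (auto split: prod.splits)

definition st where "st T p K = stl T (pref p K) K"

lemma stl_pref: "K \<le> M \<Longrightarrow> stl T (pref p M) K = st T p K"
  unfolding st_def by (rule stl_cong) auto

lemma st_0: "st T p 0 = (0,0)" by (simp add: st_def)

lemma st_Suc: "st T p (Suc K) = (case st T p K of (n,j) \<Rightarrow>
      if \<exists>i\<le>Suc K. pref p i \<notin> T n then (Suc n, Suc K) else (n,j))"
proof -
  have "st T p (Suc K) = (case stl T (pref p (Suc K)) K of (n,j) \<Rightarrow>
      if \<exists>i\<le>Suc K. take i (pref p (Suc K)) \<notin> T n then (Suc n, Suc K) else (n,j))"
    by (simp add: st_def)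
  also have "\<dots> = (case st T p K of (n,j) \<Rightarrow>
      if \<exists>i\<le>Suc K. pref p i \<notin> T n then (Suc n, Suc K) else (n,j))"
    using stl_pref[of K "Suc K" T p] by (auto split: prod.splits)
  finally show ?thesis .
qed

lemma st_struct: "st T p K = (n,j) \<Longrightarrow> j \<le> K \<and> (\<forall>m. j \<le> m \<longrightarrow> m \<le> K \<longrightarrow> st T p m = (n,j))"
proof (induction K arbitrary: n j)
  case 0 then show ?case by (auto simp: st_0)
next
  case (Suc K)
  obtain n' j' where e: "st T p K = (n',j')" by force
  show ?case
  proof (cases "\<exists>i\<le>Suc K. pref p i \<notin> T n'")
    case True
    then have "st T p (Suc K) = (Suc n', Suc K)" using e by (simp add: st_Suc)
    then show ?thesis using Suc.prems by auto
  next
    case False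
    then have "st T p (Suc K) = (n', j')" using e by (simp add: st_Suc)
    have ee: "n = n'" "j = j'" using Suc.prems \<open>st T p (Suc K) = (n', j')\<close> by auto
    have ih: "j' \<le> K \<and> (\<forall>m. j' \<le> m \<longrightarrow> m \<le> K \<longrightarrow> st T p m = (n',j'))" using Suc.IH[OF e] .
    show ?thesis unfolding ee
    proof (intro conjI allI impI)
      show "j' \<le> Suc K" using ih by simp
      fix m assume "j' \<le> m" "m \<le> Suc K"
      then consider "m \<le> K" | "m = Suc K" by linarith
      then show "st T p m = (n', j')" 
      proof cases
        case 1 then show ?thesis using ih \<open>j' \<le> m\<close> by blast
      next
        case 2 then show ?thesis using \<open>st T p (Suc K) = (n', j')\<close> by simp
      qed
    qed
  qed
qed

primrec gl :: "(nat \<Rightarrow> 'c) \<Rightarrow> nat \<Rightarrow> ('c list \<Rightarrow> 'c) \<Rightarrow> nat \<Rightarrow> 'c list" where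
  "gl p K f 0 = []"
| "gl p K f (Suc k) = gl p K f k @ [if k < K then p k else f (gl p K f k)]"

lemma length_gl[simp]: "length (gl p K f k) = k" by (induction k) auto

definition extp where "extp p K f k = gl p K f (Suc k) ! k"

lemma pref_extp: "pref (extp p K f) k = gl p K f k"
proof (induction k)
  case 0 then show ?case by simp
next
  case (Suc k)
  then show ?case by (simp add: pref_Suc extp_def nth_append)
qed

lemma extp_lt: "k < K \<Longrightarrow> extp p K f k = p k"
  by (simp add: extp_def nth_append)

lemma extp_ge: "K \<le> k \<Longrightarrow> extp p K f k = f (pref (extp p K f) k)"
  by (simp add: extp_def nth_append pref_extp)

lemma pref_extp_le: "k \<le> K \<Longrightarrow> pref (extp p K f) k = pref p k"
  by (simp add: pref_def extp_lt)

locale game =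
  fixes LA :: "('a \<times> 'b) list \<Rightarrow> 'a set" and LB :: "('a \<times> 'b) list \<Rightarrow> 'a \<Rightarrow> 'b set"
  assumes LA_ne: "LA h \<noteq> {}" and LB_ne: "a \<in> LA h \<Longrightarrow> LB h a \<noteq> {}"
begin

definition legal_I where "legal_I \<sigma> \<longleftrightarrow> (\<forall>h. \<sigma> h \<in> LA h)"
definition legal_II where "legal_II \<tau> \<longleftrightarrow> (\<forall>h a. a \<in> LA h \<longrightarrow> \<tau> h a \<in> LB h a)"
definition lplay where
  "lplay p \<longleftrightarrow> (\<forall>n. fst (p n) \<in> LA (pref p n) \<and> snd (p n) \<in> LB (pref p n) (fst (p n)))"
definition consI where "consI \<sigma> p j \<longleftrightarrow> (\<forall>k\<ge>j. fst (p k) = \<sigma> (pref p k))"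
definition consII where "consII \<tau> p j \<longleftrightarrow> (\<forall>k\<ge>j. snd (p k) = \<tau> (pref p k) (fst (p k)))"
definition dI where "dI h = (SOME a. a \<in> LA h)"
definition dII where "dII h a = (SOME b. b \<in> LB h a)"

lemma legal_dI: "legal_I dI"
  unfolding legal_I_def dI_def using LA_ne by (simp add: some_in_eq)
lemma legal_dII: "legal_II dII"
  unfolding legal_II_def dII_def using LB_ne by (simp add: some_in_eq)

definition CW where "CW Q s \<sigma> \<longleftrightarrow> (\<forall>p. lplay p \<and> pref p (length s) = s \<and> consI \<sigma> p (length s)
     \<longrightarrow> (\<forall>k>length s. Q (pref p k)))"
definition OW where "OW Q s \<tau> \<longleftrightarrow> (\<forall>p. lplay p \<and> pref p (length s) = s \<and> consII \<tau> p (length s)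
     \<longrightarrow> (\<exists>k>length s. \<not> Q (pref p k)))"
definition CWinI where "CWinI Q s \<longleftrightarrow> (\<exists>\<sigma>. legal_I \<sigma> \<and> CW Q s \<sigma>)"
definition OWinII where "OWinII Q s \<longleftrightarrow> (\<exists>\<tau>. legal_II \<tau> \<and> OW Q s \<tau>)"

lemma one_step:
  assumes "\<not> OWinII Q s"
  shows "\<exists>a\<in>LA s. \<forall>b\<in>LB s a. Q (s @ [(a,b)]) \<and> \<not> OWinII Q (s @ [(a,b)])"
proof (rule ccontr)
  assume "\<not> ?thesis"
  then have ex: "\<forall>a\<in>LA s. \<exists>b\<in>LB s a. \<not> Q (s @ [(a,b)]) \<or> OWinII Q (s @ [(a,b)])" by blast
  define bch where "bch a = (SOME b. b \<in> LB s a \<and> (\<not> Q (s @ [(a,b)]) \<or> OWinII Q (s @ [(a,b)])))" for a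
  define tw where "tw t = (SOME \<tau>. legal_II \<tau> \<and> OW Q t \<tau>)" for t
  define \<tau> where "\<tau> h a = (if h = s then (if a \<in> LA s then bch a else dII h a)
      else if length s < length h \<and> take (length s) h = s \<and> OWinII Q (take (Suc (length s)) h)
      then tw (take (Suc (length s)) h) h a else dII h a)" for h a
  have bch: "bch a \<in> LB s a \<and> (\<not> Q (s @ [(a,bch a)]) \<or> OWinII Q (s @ [(a,bch a)]))"
    if "a \<in> LA s" for a
  proof -
    from ex that obtain b where "b \<in> LB s a \<and> (\<not> Q (s @ [(a,b)]) \<or> OWinII Q (s @ [(a,b)]))" by blast
    then show ?thesis unfolding bch_def by (rule someI)
  qed
  have tw: "legal_II (tw t) \<and> OW Q t (tw t)" if "OWinII Q t" for t
    using that unfolding tw_def OWinII_def by (metis (mono_tags, lifting) someI_ex)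
  have "legal_II \<tau>"
    unfolding legal_II_def
  proof (intro allI impI)
    fix h a assume a: "a \<in> LA h"
    show "\<tau> h a \<in> LB h a"
    proof (cases "h = s")
      case True then show ?thesis using a bch unfolding \<tau>_def by simp
    next
      case hs: False
      show ?thesis
      proof (cases "length s < length h \<and> take (length s) h = s \<and> OWinII Q (take (Suc (length s)) h)")
        case True
        have "\<tau> h a = tw (take (Suc (length s)) h) h a" unfolding \<tau>_def if_not_P[OF hs] if_P[OF True] by (rule refl)
        then show ?thesis using tw True a unfolding legal_II_def by simp
      next
        case False
        have "\<tau> h a = dII h a" unfolding \<tau>_def if_not_P[OF hs] if_not_P[OF False] by (rule refl)
        then show ?thesis using legal_dII a unfolding legal_II_def by simp
      qed
    qed
  qed
  moreover have "OW Q s \<tau>"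
    unfolding OW_def
  proof (intro allI impI)
    fix p assume H: "lplay p \<and> pref p (length s) = s \<and> consII \<tau> p (length s)"
    let ?n = "length s"
    obtain a b where ab: "p ?n = (a,b)" by force
    have aL: "a \<in> LA s" using H ab unfolding lplay_def by (metis fst_conv)
    have "b = \<tau> s a" using H ab unfolding consII_def by (metis fst_conv snd_conv order_refl)
    then have bb: "b = bch a" using aL by (simp add: \<tau>_def)
    have ps: "pref p (Suc ?n) = s @ [(a,b)]" using H ab by (simp add: pref_Suc)
    show "\<exists>k>?n. \<not> Q (pref p k)"
    proof (cases "Q (s @ [(a,b)])")
      case False then show ?thesis using ps by (intro exI[of _ "Suc ?n"]) auto
    next
      case True
      let ?t = "s @ [(a,b)]"
      have ow: "OWinII Q ?t" using bch[OF aL] True bb by auto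
      have "consII (tw ?t) p (length ?t)"
        unfolding consII_def
      proof (intro allI impI)
        fix k assume k: "length ?t \<le> k"
        have kk: "?n \<le> k" "Suc ?n \<le> k" using k by simp_all
        have t1: "take ?n (pref p k) = s" using H take_pref[OF kk(1), where p=p] by simp
        have t2: "take (Suc ?n) (pref p k) = ?t" using ps take_pref[OF kk(2), where p=p] by simp
        have "length (pref p k) \<noteq> length s" using kk by simp
        then have ne: "pref p k \<noteq> s" by metis
        have "length s < length (pref p k)" using kk by simp
        then have "\<tau> (pref p k) (fst (p k)) = tw ?t (pref p k) (fst (p k))"
          using ow t1 t2 ne unfolding \<tau>_def by simp
        then show "snd (p k) = tw ?t (pref p k) (fst (p k))" using H k unfolding consII_def by auto
      qed
      moreover have "OW Q ?t (tw ?t)" using tw[OF ow] by simp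
      moreover have "pref p (length ?t) = ?t" using ps by simp
      ultimately obtain k where "k > length ?t" "\<not> Q (pref p k)"
        using H unfolding OW_def by blast
      then show ?thesis by (intro exI[of _ k]) auto
    qed
  qed
  ultimately have "OWinII Q s" unfolding OWinII_def by blast
  with assms show False by simp
qed

definition \<sigma>GS where "\<sigma>GS Q h = (if \<exists>a\<in>LA h. \<forall>b\<in>LB h a. Q (h@[(a,b)]) \<and> \<not> OWinII Q (h@[(a,b)])
   then SOME a. a\<in>LA h \<and> (\<forall>b\<in>LB h a. Q (h@[(a,b)]) \<and> \<not> OWinII Q (h@[(a,b)])) else dI h)"

lemma \<sigma>GS_good: "\<exists>a\<in>LA h. \<forall>b\<in>LB h a. Q (h@[(a,b)]) \<and> \<not> OWinII Q (h@[(a,b)]) \<Longrightarrow>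
   \<sigma>GS Q h \<in> LA h \<and> (\<forall>b\<in>LB h (\<sigma>GS Q h). Q (h@[(\<sigma>GS Q h,b)]) \<and> \<not> OWinII Q (h@[(\<sigma>GS Q h,b)]))"
  unfolding \<sigma>GS_def by (simp, rule someI_ex) blast

lemma legal_\<sigma>GS: "legal_I (\<sigma>GS Q)"
  unfolding legal_I_def
proof
  fix h
  show "\<sigma>GS Q h \<in> LA h"
  proof (cases "\<exists>a\<in>LA h. \<forall>b\<in>LB h a. Q (h@[(a,b)]) \<and> \<not> OWinII Q (h@[(a,b)])")
    case True then show ?thesis using \<sigma>GS_good by blast
  next
    case False then show ?thesis using legal_dI unfolding legal_I_def \<sigma>GS_def if_not_P[OF False] by simp
  qed
qed

lemma GS: "CWinI Q s \<or> OWinII Q s"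
proof (cases "OWinII Q s")
  case False
  have "CW Q s (\<sigma>GS Q)" unfolding CW_def
  proof (rule allI, rule impI)
    fix p assume H: "lplay p \<and> pref p (length s) = s \<and> consI (\<sigma>GS Q) p (length s)"
    have "\<not> OWinII Q (pref p k) \<and> (k > length s \<longrightarrow> Q (pref p k))" if "length s \<le> k" for k
      using that
    proof (induction k rule: dec_induct)
      case base then show ?case using H False by simp
    next
      case (step k)
      then have g: "\<sigma>GS Q (pref p k) \<in> LA (pref p k) \<and> (\<forall>b\<in>LB (pref p k) (\<sigma>GS Q (pref p k)).
         Q (pref p k @[(\<sigma>GS Q (pref p k),b)]) \<and> \<not> OWinII Q (pref p k @[(\<sigma>GS Q (pref p k),b)]))"
        using one_step \<sigma>GS_good by blast
      have f: "fst (p k) = \<sigma>GS Q (pref p k)" using H step(1) unfolding consI_def by auto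
      have "snd (p k) \<in> LB (pref p k) (fst (p k))" using H unfolding lplay_def by auto
      then have "Q (pref p k @ [p k]) \<and> \<not> OWinII Q (pref p k @ [p k])"
        using g f by (metis prod.collapse)
      then show ?case by (simp add: pref_Suc)
    qed
    then show "\<forall>k>length s. Q (pref p k)" by auto
  qed
  then have "CWinI Q s" unfolding CWinI_def using legal_\<sigma>GS by blast
  then show ?thesis by simp
qed simp

end


context game begin

definition WinT :: "(nat \<Rightarrow> ('a\<times>'b) list set) \<Rightarrow> (nat \<Rightarrow> 'a\<times>'b) \<Rightarrow> bool" where
  "WinT T p \<longleftrightarrow> (\<exists>n. \<forall>k. pref p k \<in> T n)"
definition QW :: "(nat \<Rightarrow> 'c list set) \<Rightarrow> 'c list set \<Rightarrow> nat \<Rightarrow> nat \<Rightarrow> 'c list \<Rightarrow> bool" where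
  "QW T W n m h \<longleftrightarrow> (\<exists>j. m < j \<and> j \<le> length h \<and> take j h \<in> W) \<or> (\<forall>i\<le>length h. take i h \<in> T n)"
definition Phi where "Phi T W = {s. \<exists>n. CWinI (QW T W n (length s)) s}"
definition WinIfrom where
  "WinIfrom T s \<longleftrightarrow> (\<exists>\<sigma>. legal_I \<sigma> \<and> (\<forall>p. lplay p \<and> pref p (length s) = s \<and> consI \<sigma> p (length s) \<longrightarrow> WinT T p))"

lemma CW_mono: "(\<And>h. Q h \<Longrightarrow> Q' h) \<Longrightarrow> CW Q s \<sigma> \<Longrightarrow> CW Q' s \<sigma>"
  unfolding CW_def by blast

lemma Phi_mono: "mono (Phi T)"
proof (rule monoI)
  fix W W' :: "('a\<times>'b) list set" assume "W \<subseteq> W'"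
  then have "QW T W n m h \<Longrightarrow> QW T W' n m h" for n m h unfolding QW_def by blast
  then show "Phi T W \<subseteq> Phi T W'"
    unfolding Phi_def CWinI_def using CW_mono by blast
qed

lemma Phi_S: "Phi T {s. WinIfrom T s} \<subseteq> {s. WinIfrom T s}"
proof
  fix s assume "s \<in> Phi T {s. WinIfrom T s}"
  then obtain n \<sigma>0 where l0: "legal_I \<sigma>0" and cw: "CW (QW T {s. WinIfrom T s} n (length s)) s \<sigma>0"
    unfolding Phi_def CWinI_def by blast
  define \<sigma>S where "\<sigma>S t = (SOME \<sigma>. legal_I \<sigma> \<and> (\<forall>p. lplay p \<and> pref p (length t) = t \<and> consI \<sigma> p (length t) \<longrightarrow> WinT T p))" for t
  have \<sigma>S: "legal_I (\<sigma>S t) \<and> (\<forall>p. lplay p \<and> pref p (length t) = t \<and> consI (\<sigma>S t) p (length t) \<longrightarrow> WinT T p)"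
    if "WinIfrom T t" for t
    using that unfolding WinIfrom_def \<sigma>S_def by (rule someI_ex)
  define P where "P h j \<longleftrightarrow> length s < j \<and> j \<le> length h \<and> WinIfrom T (take j h)" for h j
  define \<sigma>' where "\<sigma>' h = (if \<exists>j. P h j then \<sigma>S (take (LEAST j. P h j) h) h else \<sigma>0 h)" for h
  have "legal_I \<sigma>'"
    unfolding legal_I_def
  proof
    fix h show "\<sigma>' h \<in> LA h"
    proof (cases "\<exists>j. P h j")
      case True
      then have "P h (LEAST j. P h j)" by (rule LeastI_ex)
      then have "WinIfrom T (take (LEAST j. P h j) h)" unfolding P_def by simp
      then show ?thesis using \<sigma>S True unfolding \<sigma>'_def legal_I_def by simp
    next
      case False then show ?thesis using l0 unfolding \<sigma>'_def legal_I_def if_not_P[OF False] by simp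
    qed
  qed
  moreover have "\<forall>p. lplay p \<and> pref p (length s) = s \<and> consI \<sigma>' p (length s) \<longrightarrow> WinT T p"
  proof (rule allI, rule impI)
    fix p assume H: "lplay p \<and> pref p (length s) = s \<and> consI \<sigma>' p (length s)"
    have Pp: "P (pref p k) j \<longleftrightarrow> length s < j \<and> j \<le> k \<and> WinIfrom T (pref p j)" for k j
      unfolding P_def by auto
    show "WinT T p"
    proof (cases "\<exists>j. length s < j \<and> WinIfrom T (pref p j)")
      case True
      define j0 where "j0 = (LEAST j. length s < j \<and> WinIfrom T (pref p j))"
      have j0: "length s < j0 \<and> WinIfrom T (pref p j0)" unfolding j0_def using True by (rule LeastI_ex)
      have j0min: "j < j0 \<Longrightarrow> \<not> (length s < j \<and> WinIfrom T (pref p j))" for j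
        unfolding j0_def using not_less_Least by blast
      have "consI (\<sigma>S (pref p j0)) p j0"
        unfolding consI_def
      proof (intro allI impI)
        fix k assume k: "j0 \<le> k"
        have ex: "\<exists>j. P (pref p k) j" using j0 k Pp by blast
        have L: "(LEAST j. P (pref p k) j) = j0"
        proof (rule Least_equality)
          show "P (pref p k) j0" using j0 k Pp by blast
          show "\<And>y. P (pref p k) y \<Longrightarrow> j0 \<le> y" using j0min Pp by (meson not_le)
        qed
        have "\<sigma>' (pref p k) = \<sigma>S (pref p j0) (pref p k)"
          unfolding \<sigma>'_def if_P[OF ex] L using k by simp
        then show "fst (p k) = \<sigma>S (pref p j0) (pref p k)"
          using H k j0 unfolding consI_def by auto
      qed
      then show ?thesis using \<sigma>S[of "pref p j0"] j0 H unfolding lplay_def by auto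
    next
      case False
      have "consI \<sigma>0 p (length s)"
        unfolding consI_def
      proof (intro allI impI)
        fix k assume k: "length s \<le> k"
        have ex: "\<not> (\<exists>j. P (pref p k) j)" using False Pp by blast
        have "\<sigma>' (pref p k) = \<sigma>0 (pref p k)"
          unfolding \<sigma>'_def if_not_P[OF ex] by (rule refl)
        then show "fst (p k) = \<sigma>0 (pref p k)"
          using H k unfolding consI_def by auto
      qed
      then have q: "\<forall>k>length s. QW T {s. WinIfrom T s} n (length s) (pref p k)"
        using cw H unfolding CW_def by blast
      have "pref p i \<in> T n" for i
      proof -
        have "QW T {s. WinIfrom T s} n (length s) (pref p (Suc (max i (length s))))"
          using q by simp
        then have "\<forall>i'\<le>Suc (max i (length s)). pref p i' \<in> T n"
          using False unfolding QW_def by auto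
        then show ?thesis by simp
      qed
      then show ?thesis unfolding WinT_def by blast
    qed
  qed
  ultimately show "s \<in> {s. WinIfrom T s}" unfolding WinIfrom_def by blast
qed

definition Lf where "Lf T = lfp (Phi T)"

lemma L_fix: "Phi T (Lf T) = Lf T"
  unfolding Lf_def using Phi_mono by (rule lfp_fixpoint)

lemma L_I: "s \<in> Lf T \<Longrightarrow> WinIfrom T s"
proof -
  have "lfp (Phi T) \<subseteq> {s. WinIfrom T s}" by (rule lfp_lowerbound) (rule Phi_S)
  then show "s \<in> Lf T \<Longrightarrow> WinIfrom T s" unfolding Lf_def by blast
qed

end


context game begin

definition \<tau>s where "\<tau>s T n t = (SOME \<tau>. legal_II \<tau> \<and> (t \<notin> Lf T \<longrightarrow> OW (QW T (Lf T) n (length t)) t \<tau>))"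

lemma \<tau>s: "legal_II (\<tau>s T n t) \<and> (t \<notin> Lf T \<longrightarrow> OW (QW T (Lf T) n (length t)) t (\<tau>s T n t))"
proof -
  have "\<exists>\<tau>. legal_II \<tau> \<and> (t \<notin> Lf T \<longrightarrow> OW (QW T (Lf T) n (length t)) t \<tau>)"
  proof (cases "t \<in> Lf T")
    case True then show ?thesis using legal_dII by blast
  next
    case False
    then have "t \<notin> Phi T (Lf T)" using L_fix by simp
    then have "\<not> CWinI (QW T (Lf T) n (length t)) t" unfolding Phi_def by blast
    then have "OWinII (QW T (Lf T) n (length t)) t" using GS by blast
    then show ?thesis unfolding OWinII_def by blast
  qed
  then show ?thesis unfolding \<tau>s_def by (rule someI_ex)
qed

definition \<tau>c where "\<tau>c T h a = (case stl T h (length h) of (n,j) \<Rightarrow> \<tau>s T n (take j h) h a)"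

lemma legal_\<tau>c: "legal_II (\<tau>c T)"
  unfolding legal_II_def
proof (intro allI impI)
  fix h a assume a: "a \<in> LA h"
  obtain n j where e: "stl T h (length h) = (n,j)" by force
  show "\<tau>c T h a \<in> LB h a" unfolding \<tau>c_def e using \<tau>s[of T n "take j h"] a
    unfolding legal_II_def by simp
qed

lemma II_wins:
  assumes root: "[] \<notin> Lf T"
  shows "\<forall>p. lplay p \<and> consII (\<tau>c T) p 0 \<longrightarrow> \<not> WinT T p"
proof (rule allI, rule impI)
  fix p assume H: "lplay p \<and> consII (\<tau>c T) p 0"
  have cons\<tau>: "snd (p m) = \<tau>s T n (pref p j) (pref p m) (fst (p m))" if "st T p m = (n,j)" for m n j
  proof -
    have jm: "j \<le> m" using st_struct[OF that] by simp
    have "stl T (pref p m) (length (pref p m)) = (n,j)" using that by (simp add: st_def)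
    then have "\<tau>c T (pref p m) (fst (p m)) = \<tau>s T n (pref p j) (pref p m) (fst (p m))"
      unfolding \<tau>c_def using jm by simp
    then show ?thesis using H unfolding consII_def by simp
  qed
  have OWp: "\<exists>k>j. \<not> QW T (Lf T) n j (pref q k)"
    if "pref p j \<notin> Lf T" "lplay q" "pref q j = pref p j" "consII (\<tau>s T n (pref p j)) q j" for q n j
  proof -
    have "OW (QW T (Lf T) n j) (pref p j) (\<tau>s T n (pref p j))" using \<tau>s[of T n "pref p j"] that(1) by simp
    then have "\<forall>q. lplay q \<and> pref q j = pref p j \<and> consII (\<tau>s T n (pref p j)) q j \<longrightarrow>
       (\<exists>k>j. \<not> QW T (Lf T) n j (pref q k))" unfolding OW_def by simp
    then show ?thesis using that by blast
  qed
  have notL: "pref p K \<notin> Lf T" for K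
  proof (induction K rule: less_induct)
    case (less K)
    show ?case
    proof (cases K)
      case 0 then show ?thesis using root by simp
    next
      case (Suc K')
      obtain n j where e: "st T p K' = (n,j)" by force
      have sj: "j \<le> K'" and stm: "\<And>m. j \<le> m \<Longrightarrow> m \<le> K' \<Longrightarrow> st T p m = (n,j)"
        using st_struct[OF e] by auto
      have tL: "pref p j \<notin> Lf T" using less.IH[of j] Suc sj by simp
      let ?\<tau>0 = "\<tau>s T n (pref p j)"
      have l0: "legal_II ?\<tau>0" using \<tau>s by blast
      define f where "f h = (dI h, ?\<tau>0 h (dI h))" for h
      define p' where "p' = extp p K f"
      have pp: "pref p' k = pref p k" if "k \<le> K" for k unfolding p'_def using that by (rule pref_extp_le)
      have lp': "lplay p'"
        unfolding lplay_def
      proof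
        fix k
        show "fst (p' k) \<in> LA (pref p' k) \<and> snd (p' k) \<in> LB (pref p' k) (fst (p' k))"
        proof (cases "k < K")
          case True
          then have "p' k = p k" "pref p' k = pref p k" using pp unfolding p'_def by (auto simp: extp_lt)
          then show ?thesis using H unfolding lplay_def by simp
        next
          case False
          then have "p' k = f (pref p' k)" unfolding p'_def by (simp add: extp_ge)
          then show ?thesis using legal_dI l0 unfolding f_def legal_I_def legal_II_def by simp
        qed
      qed
      have c': "consII ?\<tau>0 p' j"
        unfolding consII_def
      proof (intro allI impI)
        fix k assume jk: "j \<le> k"
        show "snd (p' k) = ?\<tau>0 (pref p' k) (fst (p' k))"
        proof (cases "k < K")
          case True
          then have "p' k = p k" "pref p' k = pref p k" using pp unfolding p'_def by (auto simp: extp_lt)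
          moreover have "st T p k = (n,j)" using stm jk True Suc by simp
          ultimately show ?thesis using cons\<tau> by simp
        next
          case False
          then have "p' k = f (pref p' k)" unfolding p'_def by (simp add: extp_ge)
          then show ?thesis unfolding f_def by simp
        qed
      qed
      have "pref p' j = pref p j" using pp sj Suc by simp
      then obtain k where k: "k > j" "\<not> QW T (Lf T) n j (pref p' k)"
        using OWp[OF tL lp' _ c'] by blast
      then have nq1: "\<And>j'. j < j' \<Longrightarrow> j' \<le> k \<Longrightarrow> pref p' j' \<notin> Lf T"
        and nq2: "\<exists>i\<le>k. pref p' i \<notin> T n"
        unfolding QW_def by auto
      show ?thesis
      proof (cases "K \<le> k")
        case True
        then have "pref p' K \<notin> Lf T" using nq1 sj Suc by simp
        then show ?thesis using pp by simp
      next
        case False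
        then have kK: "k \<le> K'" using Suc by simp
        obtain i where i: "i \<le> k" "pref p' i \<notin> T n" using nq2 by blast
        have pi: "pref p i \<notin> T n" using i pp kK Suc by simp
        obtain k' where k': "k = Suc k'" using k(1) by (cases k) auto
        have "st T p k' = (n,j)" using stm k' k(1) kK by simp
        moreover have ex: "\<exists>i\<le>Suc k'. pref p i \<notin> T n" using i pi k' by blast
        ultimately have "st T p (Suc k') = (Suc n, Suc k')" by (simp add: st_Suc)
        moreover have "st T p (Suc k') = (n,j)" using stm k(1) kK k' by simp
        ultimately show ?thesis by simp
      qed
    qed
  qed
  have forever_False: False if e: "st T p K = (n,j)" and fv: "\<forall>K'\<ge>K. st T p K' = (n,j)" for K n j
  proof -
    have sj: "j \<le> K" using st_struct[OF e] by simp
    have all: "st T p m = (n,j)" if "j \<le> m" for m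
    proof (cases "m \<le> K")
      case True then show ?thesis using st_struct[OF e] that by blast
    next
      case False then show ?thesis using fv by simp
    qed
    have "consII (\<tau>s T n (pref p j)) p j" unfolding consII_def using all cons\<tau> by blast
    then obtain k where "k > j" "\<not> QW T (Lf T) n j (pref p k)"
      using OWp[OF notL[of j] _ refl] H by blast
    then obtain i where i: "i \<le> k" "pref p i \<notin> T n" unfolding QW_def by auto
    let ?M = "max k K"
    have "st T p ?M = (n,j)" using fv by simp
    moreover have "\<exists>i'\<le>Suc ?M. pref p i' \<notin> T n" using i by (intro exI[of _ i]) auto
    ultimately have "st T p (Suc ?M) = (Suc n, Suc ?M)" by (simp add: st_Suc)
    moreover have "st T p (Suc ?M) = (n,j)" using fv by simp
    ultimately show False by simp
  qed
  have switch: "\<exists>K' j'. st T p K' = (Suc n, j') \<and> (\<exists>i. pref p i \<notin> T n)" if e: "st T p K = (n,j)" for K n j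
  proof -
    have ex: "\<exists>m. K \<le> m \<and> st T p m \<noteq> (n,j)" using forever_False[OF e] by blast
    define m where "m = (LEAST m. K \<le> m \<and> st T p m \<noteq> (n,j))"
    have m: "K \<le> m \<and> st T p m \<noteq> (n,j)" unfolding m_def using ex by (rule LeastI_ex)
    have mmin: "m' < m \<Longrightarrow> \<not> (K \<le> m' \<and> st T p m' \<noteq> (n,j))" for m'
      unfolding m_def by (rule not_less_Least)
    have "m \<noteq> K" using m e by auto
    then obtain m' where m': "m = Suc m'" "K \<le> m'" using m by (cases m) auto
    have sm': "st T p m' = (n,j)" using mmin[of m'] m' by auto
    show ?thesis
    proof (cases "\<exists>i\<le>Suc m'. pref p i \<notin> T n")
      case True
      then have "st T p (Suc m') = (Suc n, Suc m')" using sm' by (simp add: st_Suc)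
      then show ?thesis using True by blast
    next
      case False
      then have "st T p (Suc m') = (n, j)" using sm' by (simp add: st_Suc)
      then show ?thesis using m m' by simp
    qed
  qed
  have phases: "\<exists>K j. st T p K = (n,j)" for n
  proof (induction n)
    case 0 then show ?case using st_0 by blast
  next
    case (Suc n) then show ?case using switch by blast
  qed
  show "\<not> WinT T p"
  proof
    assume "WinT T p"
    then obtain n0 where n0: "\<forall>k. pref p k \<in> T n0" unfolding WinT_def by blast
    obtain K j where "st T p K = (n0,j)" using phases by blast
    then obtain i where "pref p i \<notin> T n0" using switch by blast
    then show False using n0 by simp
  qed
qed

theorem determined:
  "WinIfrom T [] \<or> (\<exists>\<tau>. legal_II \<tau> \<and> (\<forall>p. lplay p \<and> consII \<tau> p 0 \<longrightarrow> \<not> WinT T p))"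
proof (cases "[] \<in> Lf T")
  case True then show ?thesis using L_I by blast
next
  case False then show ?thesis using II_wins legal_\<tau>c by blast
qed

end


lemma filter_enum:
  assumes sm: "strict_mono (e::nat\<Rightarrow>nat)" and rg: "range e = S"
  shows "\<exists>m. filter (\<lambda>n. n \<in> S) [0..<k] = map e [0..<m] \<and> (\<forall>i. e i < k \<longleftrightarrow> i < m)"
proof (induction k)
  case 0 then show ?case by (intro exI[of _ 0]) simp
next
  case (Suc k)
  then obtain m where m: "filter (\<lambda>n. n \<in> S) [0..<k] = map e [0..<m]" "\<forall>i. e i < k \<longleftrightarrow> i < m" by blast
  show ?case
  proof (cases "k \<in> S")
    case True
    then obtain c where c: "e c = k" using rg by blast
    have nc: "\<not> c < m" using m(2) c by auto
    have em: "e m = k"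
    proof -
      have "\<not> e m < k" using m(2) by simp
      moreover have "\<not> e m > k"
      proof
        assume "e m > k" then have "e c < e m" using c by simp
        then have "c < m" using sm by (simp add: strict_mono_less)
        then show False using nc by simp
      qed
      ultimately show ?thesis by simp
    qed
    have "filter (\<lambda>n. n \<in> S) [0..<Suc k] = map e [0..<Suc m]" using m(1) True em by simp
    moreover have "\<forall>i. e i < Suc k \<longleftrightarrow> i < Suc m"
    proof
      fix i
      have "e i < Suc k \<longleftrightarrow> e i < k \<or> e i = k" by auto
      also have "\<dots> \<longleftrightarrow> i < m \<or> i = m" using m(2) em strict_mono_eq[OF sm, of i m] by auto
      finally show "e i < Suc k \<longleftrightarrow> i < Suc m" by auto
    qed
    ultimately show ?thesis by blast
  next
    case False
    then have ne: "e i \<noteq> k" for i using rg by blast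
    have "filter (\<lambda>n. n \<in> S) [0..<Suc k] = map e [0..<m]" using m(1) False by simp
    moreover have "\<forall>i. e i < Suc k \<longleftrightarrow> i < m" using m(2) ne less_Suc_eq by blast
    ultimately show ?thesis by blast
  qed
qed

type_synonym hst = "(nat set \<times> (nat \<times> int)) list"

definition revx :: "hst \<Rightarrow> nat list" where
  "revx h = map (\<lambda>e. nat (snd (snd e))) (filter (\<lambda>e. snd (snd e) \<noteq> -1) h)"

lemma revx_tilde:
  fixes p :: "nat \<Rightarrow> nat set \<times> nat \<times> int"
  assumes inf: "infinite {n. snd (snd (p n)) \<noteq> -1}"
  shows "i < length (revx (pref p k)) \<Longrightarrow> revx (pref p k) ! i = tilde (\<lambda>n. snd (snd (p n))) i"
    and "\<exists>k. i < length (revx (pref p k))"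
proof -
  let ?S = "{n. snd (snd (p n)) \<noteq> -1}"
  let ?e = "enumerate ?S"
  have sm: "strict_mono ?e" using strict_mono_enumerate[OF inf] .
  have rg: "range ?e = ?S" using range_enumerate[OF inf] .
  have rv: "revx (pref p k) = map (\<lambda>n. nat (snd (snd (p n)))) (filter (\<lambda>n. n \<in> ?S) [0..<k])" for k
    unfolding revx_def pref_def by (simp add: filter_map o_def)
  show "revx (pref p k) ! i = tilde (\<lambda>n. snd (snd (p n))) i" if "i < length (revx (pref p k))"
  proof -
    obtain m where m: "filter (\<lambda>n. n \<in> ?S) [0..<k] = map ?e [0..<m]" using filter_enum[OF sm rg] by blast
    have "i < m" using that rv m by simp
    then show ?thesis using rv m by (simp add: tilde_def)
  qed
  show "\<exists>k. i < length (revx (pref p k))"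
  proof -
    obtain m where m: "filter (\<lambda>n. n \<in> ?S) [0..<Suc (?e i)] = map ?e [0..<m]" "\<forall>i'. ?e i' < Suc (?e i) \<longleftrightarrow> i' < m"
      using filter_enum[OF sm rg] by blast
    have "i < m" using m(2) by blast
    then show ?thesis using rv m(1) by (intro exI[of _ "Suc (?e i)"]) simp
  qed
qed

lemma cont_local:
  assumes "cont_into_P F"
  shows "\<exists>N. \<forall>y. (\<forall>i<N. y i = x i) \<longrightarrow> (k \<in> F y \<longleftrightarrow> k \<in> F x)"
proof -
  let ?f = "\<lambda>x. chi (F x) k"
  have c: "continuous_on UNIV ?f"
    using assms unfolding cont_into_P_def by (rule continuous_on_product_then_coordinatewise)
  have o: "open (?f -` {?f x})"
    using c open_vimage by (metis open_discrete)
  then have "openin (product_topology (\<lambda>i. euclidean) UNIV) (?f -` {?f x})"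
    unfolding open_fun_def by simp
  from product_topology_open_contains_basis[OF this, of x]
  obtain X where H: "x \<in> (\<Pi>\<^sub>E i\<in>UNIV. X i)" "finite {i. X i \<noteq> UNIV}"
     "(\<Pi>\<^sub>E i\<in>UNIV. X i) \<subseteq> ?f -` {?f x}" by auto
  obtain N where N: "\<forall>i\<in>{i. X i \<noteq> UNIV}. i < N"
    using H(2) by (meson finite_nat_set_iff_bounded)
  show ?thesis
  proof (intro exI allI impI)
    fix y :: "nat \<Rightarrow> nat" assume a: "\<forall>i<N. y i = x i"
    have "y \<in> (\<Pi>\<^sub>E i\<in>UNIV. X i)"
      using H(1) N a by (auto simp: PiE_iff) (metis UNIV_I)
    then have "?f y = ?f x" using H(3) by auto
    then show "k \<in> F y \<longleftrightarrow> k \<in> F x" by (auto simp: chi_def split: if_splits)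
  qed
qed

datatype idx = IA nat | IB nat "nat list" | IC nat nat "nat list"
instance idx :: countable by countable_datatype

definition compat :: "hst \<Rightarrow> nat list \<Rightarrow> bool" where
  "compat h u \<longleftrightarrow> (\<forall>i. i < length (revx h) \<longrightarrow> i < length u \<longrightarrow> revx h ! i = u ! i)"
definition forces :: "((nat \<Rightarrow> nat) \<Rightarrow> nat set) \<Rightarrow> nat \<Rightarrow> nat list \<Rightarrow> bool \<Rightarrow> bool" where
  "forces F k u v \<longleftrightarrow> (\<forall>y. (\<forall>i<length u. y i = u ! i) \<longrightarrow> (k \<in> F y \<longleftrightarrow> v))"

fun TT :: "((nat \<Rightarrow> nat) \<Rightarrow> nat set) \<Rightarrow> idx \<Rightarrow> hst set" where
  "TT F (IA N) = {h. \<forall>i<length h. N \<le> i \<longrightarrow> snd (snd (h!i)) = -1}"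
| "TT F (IB k u) = {h. forces F k u True \<and> compat h u \<and> (\<forall>i<length h. fst (snd (h!i)) \<noteq> k)}"
| "TT F (IC n c u) = {h. forces F c u False \<and> compat h u \<and> (n < length h \<longrightarrow> fst (snd (h!n)) = c)}"

definition TN :: "((nat \<Rightarrow> nat) \<Rightarrow> nat set) \<Rightarrow> nat \<Rightarrow> hst set" where "TN F n = TT F (from_nat n)"

lemma ex_TN: "(\<exists>n. P (TN F n)) \<longleftrightarrow> (\<exists>x. P (TT F x))"
  unfolding TN_def by (metis from_nat_to_nat)

lemma compat_prefix:
  fixes p :: "nat \<Rightarrow> nat set \<times> nat \<times> int"
  assumes inf: "infinite {n. snd (snd (p n)) \<noteq> -1}" and c: "\<forall>k. compat (pref p k) u"
  shows "\<forall>i<length u. tilde (\<lambda>n. snd (snd (p n))) i = u ! i"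
proof (intro allI impI)
  fix i assume i: "i < length u"
  obtain k where k: "i < length (revx (pref p k))" using revx_tilde(2)[OF inf] by blast
  show "tilde (\<lambda>n. snd (snd (p n))) i = u ! i"
    using revx_tilde(1)[OF inf k] c k i unfolding compat_def by metis
qed

lemma compat_tilde:
  fixes p :: "nat \<Rightarrow> nat set \<times> nat \<times> int"
  assumes inf: "infinite {n. snd (snd (p n)) \<noteq> -1}"
  shows "compat (pref p k) (map (tilde (\<lambda>n. snd (snd (p n)))) [0..<N])"
  unfolding compat_def using revx_tilde(1)[OF inf] by simp

lemma WinT_H:
  fixes p :: "nat \<Rightarrow> nat set \<times> nat \<times> int"
  assumes cF: "cont_into_P F"
  shows "(\<exists>n. \<forall>k. pref p k \<in> TN F n) \<longleftrightarrow> \<not> H_II_wins F (\<lambda>n. snd (p n))"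
proof -
  let ?g = "\<lambda>n. snd (snd (p n))"
  let ?b = "\<lambda>n. fst (snd (p n))"
  let ?x = "tilde ?g"
  have hw: "H_II_wins F (\<lambda>n. snd (p n)) \<longleftrightarrow> infinite {n. ?g n \<noteq> -1} \<and> F ?x = range ?b"
    unfolding H_II_wins_def by simp
  have pn: "pref p k ! i = p i" if "i < k" for k i using that by simp
  have "(\<exists>z. \<forall>k. pref p k \<in> TT F z) \<longleftrightarrow> \<not> H_II_wins F (\<lambda>n. snd (p n))"
  proof
    assume "\<exists>z. \<forall>k. pref p k \<in> TT F z"
    then obtain z where z: "\<forall>k. pref p k \<in> TT F z" by blast
    show "\<not> H_II_wins F (\<lambda>n. snd (p n))"
    proof (cases z)
      case (IA N)
      have gN: "?g n = -1" if "N \<le> n" for n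
      proof -
        have "pref p (Suc n) \<in> TT F (IA N)" using z[unfolded IA] by blast
        then have "\<forall>i<Suc n. N \<le> i \<longrightarrow> snd (snd (pref p (Suc n) ! i)) = -1" by simp
        then have "snd (snd (pref p (Suc n) ! n)) = -1" using that by blast
        then show ?thesis by simp
      qed
      have "{n. ?g n \<noteq> -1} \<subseteq> {..<N}"
      proof
        fix n assume "n \<in> {n. ?g n \<noteq> -1}"
        then have "\<not> N \<le> n" using gN by auto
        then show "n \<in> {..<N}" by simp
      qed
      then have "finite {n. ?g n \<noteq> -1}" using finite_subset by blast
      then show ?thesis using hw by simp
    next
      case (IB k u)
      show ?thesis
      proof (cases "infinite {n. ?g n \<noteq> -1}")
        case True
        have f: "forces F k u True" using z IB by simp
        have c: "\<forall>m. compat (pref p m) u" using z IB by simp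
        have "\<forall>i<length u. ?x i = u ! i" using compat_prefix[OF True c] .
        then have kin: "k \<in> F ?x" using f unfolding forces_def by blast
        have bne: "?b n \<noteq> k" for n
        proof -
          have "pref p (Suc n) \<in> TT F (IB k u)" using z[unfolded IB] by blast
          then have "\<forall>i<Suc n. fst (snd (pref p (Suc n) ! i)) \<noteq> k" by simp
          then have "fst (snd (pref p (Suc n) ! n)) \<noteq> k" by blast
          then show ?thesis by simp
        qed
        have "k \<notin> range ?b" using bne by (metis rangeE)
        then have "F ?x \<noteq> range ?b" using kin by blast
        then show ?thesis using hw by simp
      qed (use hw in simp)
    next
      case (IC n c u)
      show ?thesis
      proof (cases "infinite {n. ?g n \<noteq> -1}")
        case True
        have f: "forces F c u False" using z IC by simp
        have cc: "\<forall>m. compat (pref p m) u" using z IC by simp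
        have "\<forall>i<length u. ?x i = u ! i" using compat_prefix[OF True cc] .
        then have cn: "c \<notin> F ?x" using f unfolding forces_def by blast
        have bc: "?b n = c"
        proof -
          have "pref p (Suc n) \<in> TT F (IC n c u)" using z[unfolded IC] by blast
          then have "fst (snd (pref p (Suc n) ! n)) = c" by simp
          then show ?thesis by simp
        qed
        have "c \<in> range ?b" using bc by (metis rangeI)
        then have "F ?x \<noteq> range ?b" using cn by blast
        then show ?thesis using hw by simp
      qed (use hw in simp)
    qed
  next
    assume nw: "\<not> H_II_wins F (\<lambda>n. snd (p n))"
    show "\<exists>z. \<forall>k. pref p k \<in> TT F z"
    proof (cases "infinite {n. ?g n \<noteq> -1}")
      case False
      then have "finite {n. ?g n \<noteq> -1}" by simp
      then obtain N where N: "\<forall>n\<in>{n. ?g n \<noteq> -1}. n < N" unfolding finite_nat_set_iff_bounded by blast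
      have gN: "?g i = -1" if "N \<le> i" for i
      proof (rule ccontr)
        assume "?g i \<noteq> -1"
        then have "i < N" using N by blast
        then show False using that by simp
      qed
      have "pref p k \<in> TT F (IA N)" for k by (simp add: gN)
      then show ?thesis by blast
    next
      case True
      then have ne: "F ?x \<noteq> range ?b" using hw nw by blast
      have ct: "compat (pref p k) (map ?x [0..<M])" for k M using compat_tilde[OF True] .
      have fo: "forces F k (map ?x [0..<N]) (k \<in> F ?x)" if "\<forall>y. (\<forall>i<N. y i = ?x i) \<longrightarrow> (k \<in> F y \<longleftrightarrow> k \<in> F ?x)" for k N
        unfolding forces_def
      proof (intro allI impI)
        fix y assume a: "\<forall>i<length (map ?x [0..<N]). y i = map ?x [0..<N] ! i"
        have "\<forall>i<N. y i = ?x i"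
        proof (intro allI impI)
          fix i assume i: "i < N"
          then show "y i = ?x i" using a[rule_format, of i] by simp
        qed
        then show "k \<in> F y \<longleftrightarrow> k \<in> F ?x" using that by blast
      qed
      show ?thesis
      proof (cases "\<exists>k. k \<in> F ?x \<and> k \<notin> range ?b")
        case True
        then obtain k where k: "k \<in> F ?x" "k \<notin> range ?b" by blast
        obtain N where N: "\<forall>y. (\<forall>i<N. y i = ?x i) \<longrightarrow> (k \<in> F y \<longleftrightarrow> k \<in> F ?x)"
          using cont_local[OF cF] by blast
        have A: "forces F k (map ?x [0..<N]) True" using fo[OF N] k(1) by simp
        have B: "\<forall>i<m. fst (snd (pref p m ! i)) \<noteq> k" for m
        proof (intro allI impI)
          fix i assume "i < m"
          then have "pref p m ! i = p i" by simp
          moreover have "?b i \<noteq> k" using k(2) by (metis rangeI)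
          ultimately show "fst (snd (pref p m ! i)) \<noteq> k" by simp
        qed
        have "pref p m \<in> TT F (IB k (map ?x [0..<N]))" for m
          using A B ct by simp
        then show ?thesis by blast
      next
        case False
        then have sb: "F ?x \<subseteq> range ?b" by blast
        have "\<not> range ?b \<subseteq> F ?x" using ne sb by (simp add: subset_antisym)
        then obtain y where y: "y \<in> range ?b" "y \<notin> F ?x" unfolding subset_iff by blast
        from y(1) obtain n where "y = ?b n" by blast
        then have n: "?b n \<notin> F ?x" using y(2) by simp
        obtain N where N: "\<forall>y. (\<forall>i<N. y i = ?x i) \<longrightarrow> (?b n \<in> F y \<longleftrightarrow> ?b n \<in> F ?x)"
          using cont_local[OF cF] by blast
        have A: "forces F (?b n) (map ?x [0..<N]) False" using fo[OF N] n by simp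
        have "pref p m \<in> TT F (IC n (?b n) (map ?x [0..<N]))" for m
          using A ct by simp
        then show ?thesis by blast
      qed
    qed
  qed
  then show ?thesis using ex_TN[of "\<lambda>T. \<forall>k. pref p k \<in> T" F] by simp
qed



lemma ideal_facts:
  assumes "ideal_on_omega I"
  shows "{} \<in> I" "UNIV \<notin> I" "A \<in> I \<Longrightarrow> B \<in> I \<Longrightarrow> A \<union> B \<in> I"
  using assms unfolding ideal_on_omega_def by auto

lemma ideal_Union:
  assumes id: "ideal_on_omega I" and fin: "finite X" and sub: "X \<subseteq> I"
  shows "\<Union>X \<in> I"
  using fin sub
proof (induction X rule: finite_induct)
  case empty then show ?case using ideal_facts(1)[OF id] by simp
next
  case (insert A X) then show ?case using ideal_facts(3)[OF id] by simp
qed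

definition LBH :: "hst \<Rightarrow> nat set \<Rightarrow> (nat \<times> int) set" where
  "LBH h a = {bm. H_legal a (length h) bm}"

lemma game_H: assumes "ideal_on_omega I" shows "game (\<lambda>h::hst. I) LBH"
proof (unfold_locales)
  show "I \<noteq> {}" using ideal_facts(1)[OF assms] by blast
next
  fix a and h :: hst assume "a \<in> I"
  then have "a \<noteq> UNIV" using ideal_facts(2)[OF assms] by blast
  then obtain b where "b \<notin> a" by blast
  then have "(b, -1) \<in> LBH h a" unfolding LBH_def H_legal_def by simp
  then show "LBH h a \<noteq> {}" by blast
qed

definition recI :: "(hst \<Rightarrow> nat set) \<Rightarrow> (nat \<times> int) list \<Rightarrow> hst" where
  "recI \<sigma> bs = foldl (\<lambda>h b. h @ [(\<sigma> h, b)]) [] bs"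
lemma recI_snoc: "recI \<sigma> (bs @ [b]) = recI \<sigma> bs @ [(\<sigma> (recI \<sigma> bs), b)]"
  by (simp add: recI_def)
definition recII :: "(hst \<Rightarrow> nat set \<Rightarrow> nat \<times> int) \<Rightarrow> nat set list \<Rightarrow> hst" where
  "recII \<tau> As = foldl (\<lambda>h A. h @ [(A, \<tau> h A)]) [] As"
lemma recII_snoc: "recII \<tau> (As @ [A]) = recII \<tau> As @ [(A, \<tau> (recII \<tau> As) A)]"
  by (simp add: recII_def)
lemma length_recII: "length (recII \<tau> As) = length As"
  by (induction As rule: rev_induct) (simp_all add: recII_snoc, simp add: recII_def)

theorem H_det:
  assumes id: "ideal_on_omega I" and cF: "cont_into_P F"
  shows "H_Cat_determined I F"
proof -
  interpret g: game "\<lambda>h::hst. I" LBH by (rule game_H[OF id])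
  have W: "g.WinT (TN F) p \<longleftrightarrow> \<not> H_II_wins F (\<lambda>n. snd (p n))" for p
    unfolding g.WinT_def by (rule WinT_H[OF cF])
  from g.determined[of "TN F"] show ?thesis
  proof
    assume "g.WinIfrom (TN F) []"
    then have "\<exists>\<sigma>'. g.legal_I \<sigma>' \<and> (\<forall>p. g.lplay p \<and> pref p (length ([]::hst)) = [] \<and> g.consI \<sigma>' p (length ([]::hst)) \<longrightarrow> g.WinT (TN F) p)"
      unfolding g.WinIfrom_def .
    then obtain \<sigma>' where lw: "g.legal_I \<sigma>' \<and> (\<forall>p. g.lplay p \<and> pref p (length ([]::hst)) = [] \<and> g.consI \<sigma>' p (length ([]::hst)) \<longrightarrow> g.WinT (TN F) p)"
      by (rule exE)
    have l: "g.legal_I \<sigma>'" using lw by (rule conjunct1)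
    have w0: "\<forall>p. g.lplay p \<and> pref p (length ([]::hst)) = [] \<and> g.consI \<sigma>' p (length ([]::hst)) \<longrightarrow> g.WinT (TN F) p"
      using lw by (rule conjunct2)
    have w: "g.WinT (TN F) p" if "g.lplay p" "g.consI \<sigma>' p 0" for p
      using w0[unfolded list.size(3) pref_0] that by blast
    have lI: "\<sigma>' h \<in> I" for h using l unfolding g.legal_I_def by blast
    define \<sigma> where "\<sigma> bs = \<sigma>' (recI \<sigma>' bs)" for bs
    have "H_I_winning I F \<sigma>"
      unfolding H_I_winning_def H_I_strategy_def
    proof (intro conjI allI impI)
      fix s show "\<sigma> s \<in> I" unfolding \<sigma>_def by (rule lI)
    next
      fix bm :: "nat \<Rightarrow> nat \<times> int" assume leg: "\<forall>n. H_legal (\<sigma> (pref bm n)) n (bm n)"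
      define p where "p n = (\<sigma> (pref bm n), bm n)" for n
      have pp: "pref p n = recI \<sigma>' (pref bm n)" for n
      proof (induction n)
        case 0 then show ?case by (simp add: recI_def)
      next
        case (Suc n)
        have "pref p (Suc n) = pref p n @ [p n]" by (rule pref_Suc)
        also have "\<dots> = recI \<sigma>' (pref bm n) @ [(\<sigma>' (recI \<sigma>' (pref bm n)), bm n)]"
          using Suc.IH unfolding p_def \<sigma>_def by simp
        also have "\<dots> = recI \<sigma>' (pref bm (Suc n))" by (simp only: pref_Suc recI_snoc)
        finally show ?case .
      qed
      have pn: "p n = (\<sigma>' (pref p n), bm n)" for n unfolding pp unfolding p_def \<sigma>_def by (rule refl)
      have "g.lplay p" unfolding g.lplay_def
      proof
        fix n
        have "snd (p n) \<in> LBH (pref p n) (fst (p n))"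
          unfolding LBH_def using leg[rule_format, of n] unfolding p_def by simp
        then show "fst (p n) \<in> I \<and> snd (p n) \<in> LBH (pref p n) (fst (p n))"
          using lI pn by simp
      qed
      moreover have "g.consI \<sigma>' p 0" unfolding g.consI_def using pn by simp
      ultimately have "g.WinT (TN F) p" by (rule w)
      then have "\<not> H_II_wins F (\<lambda>n. snd (p n))" using W by blast
      moreover have "(\<lambda>n. snd (p n)) = bm" unfolding p_def by simp
      ultimately show "\<not> H_II_wins F bm" by simp
    qed
    then show ?thesis unfolding H_Cat_determined_def by blast
  next
    assume "\<exists>\<tau>. g.legal_II \<tau> \<and> (\<forall>p. g.lplay p \<and> g.consII \<tau> p 0 \<longrightarrow> \<not> g.WinT (TN F) p)"
    then obtain \<tau>' where l: "g.legal_II \<tau>'"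
      and w0: "\<forall>p. g.lplay p \<and> g.consII \<tau>' p 0 \<longrightarrow> \<not> g.WinT (TN F) p" by (elim exE conjE) blast
    have w: "\<not> g.WinT (TN F) p" if "g.lplay p" "g.consII \<tau>' p 0" for p
      using w0 that by blast
    have lII: "\<tau>' h a \<in> LBH h a" if "a \<in> I" for h a using l that unfolding g.legal_II_def by blast
    define \<tau> where "\<tau> As = \<tau>' (recII \<tau>' (butlast As)) (last As)" for As
    have "H_II_winning I F \<tau>"
      unfolding H_II_winning_def H_II_strategy_def
    proof (intro conjI allI impI)
      fix As :: "nat set list" assume ne: "As \<noteq> []" and sub: "set As \<subseteq> I"
      have "last As \<in> I" using ne sub by auto
      then have "\<tau> As \<in> LBH (recII \<tau>' (butlast As)) (last As)"
        unfolding \<tau>_def by (rule lII)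
      then show "H_legal (last As) (length As - 1) (\<tau> As)" unfolding LBH_def by (simp add: length_recII)
    next
      fix A :: "nat \<Rightarrow> nat set" assume AI: "\<forall>n. A n \<in> I"
      define p where "p n = (A n, \<tau> (pref A (Suc n)))" for n
      have tA: "\<tau> (pref A (Suc n)) = \<tau>' (recII \<tau>' (pref A n)) (A n)" for n
        unfolding \<tau>_def pref_Suc by simp
      have pp: "pref p n = recII \<tau>' (pref A n)" for n
      proof (induction n)
        case 0 then show ?case by (simp add: recII_def)
      next
        case (Suc n)
        have "pref p (Suc n) = pref p n @ [p n]" by (rule pref_Suc)
        also have "\<dots> = recII \<tau>' (pref A n) @ [(A n, \<tau>' (recII \<tau>' (pref A n)) (A n))]"
          using Suc.IH tA[of n] unfolding p_def by simp
        also have "\<dots> = recII \<tau>' (pref A (Suc n))" by (simp only: pref_Suc recII_snoc)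
        finally show ?case .
      qed
      have pn: "p n = (A n, \<tau>' (pref p n) (A n))" for n unfolding pp p_def tA by (rule refl)
      have "g.lplay p" unfolding g.lplay_def
      proof
        fix n
        have "\<tau>' (pref p n) (A n) \<in> LBH (pref p n) (A n)" using AI lII by blast
        then show "fst (p n) \<in> I \<and> snd (p n) \<in> LBH (pref p n) (fst (p n))"
          using AI pn by simp
      qed
      moreover have "g.consII \<tau>' p 0" unfolding g.consII_def using pn by simp
      ultimately have "\<not> g.WinT (TN F) p" by (rule w)
      then have "H_II_wins F (\<lambda>n. snd (p n))" using W by blast
      moreover have "(\<lambda>n. snd (p n)) = (\<lambda>n. \<tau> (pref A (Suc n)))" unfolding p_def by simp
      ultimately show "H_II_wins F (\<lambda>n. \<tau> (pref A (Suc n)))" by simp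
    qed
    then show ?thesis unfolding H_Cat_determined_def by blast
  qed
qed

lemma strict_mono_range_eq:
  fixes e1 e2 :: "nat \<Rightarrow> nat"
  assumes s1: "strict_mono e1" and s2: "strict_mono e2" and r: "range e1 = range e2"
  shows "e1 i = e2 i"
proof (induction i rule: less_induct)
  case (less i)
  have "e1 i \<in> range e2" using r by blast
  then obtain j where j: "e1 i = e2 j" by blast
  have "e2 i \<in> range e1" using r by blast
  then obtain k where k: "e2 i = e1 k" by blast
  show ?case
  proof (rule ccontr)
    assume ne: "e1 i \<noteq> e2 i"
    then have ji: "j \<noteq> i" using j by auto
    show False
    proof (cases "j < i")
      case True
      then have "e1 i = e1 j" using j less.IH by simp
      then show False using ji strict_mono_eq[OF s1] by simp
    next
      case False
      then have "i < j" using ji by simp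
      then have "e2 i < e2 j" using s2 by (simp add: strict_mono_less)
      then have "e1 k < e1 i" using j k by simp
      then have ki: "k < i" using s1 by (simp add: strict_mono_less)
      then have "e2 i = e2 k" using k less.IH by simp
      then show False using ki strict_mono_eq[OF s2] by simp
    qed
  qed
qed

lemma G_I_from_H:
  assumes id: "ideal_on_omega I" and rF: "range F = Iplus I" and w: "H_I_winning I F \<sigma>"
  shows "\<exists>\<sigma>G. G_I_winning I \<sigma>G"
proof -
  define MS where "MS n = {ms :: int list. length ms = n \<and> (\<forall>i<n. -1 \<le> ms!i \<and> ms!i < int i)}" for n
  have finMS: "finite (MS n)" for n
  proof -
    have "MS n \<subseteq> {ms. set ms \<subseteq> {-1..int n} \<and> length ms = n}"
    proof
      fix ms assume "ms \<in> MS n"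
      then have L: "length ms = n" and B: "\<forall>i<n. -1 \<le> ms!i \<and> ms!i < int i" unfolding MS_def by auto
      have "set ms \<subseteq> {-1..int n}"
      proof
        fix x assume "x \<in> set ms"
        then obtain i where i: "i < length ms" "ms!i = x" by (auto simp: in_set_conv_nth)
        then show "x \<in> {-1..int n}" using B L by force
      qed
      then show "ms \<in> {ms. set ms \<subseteq> {-1..int n} \<and> length ms = n}" using L by simp
    qed
    moreover have "finite {ms. set ms \<subseteq> {-1..int n} \<and> length ms = n}"
      by (rule finite_lists_length_eq) simp
    ultimately show ?thesis by (rule finite_subset)
  qed
  define \<sigma>G where "\<sigma>G bs = \<Union> ((\<lambda>ms. \<sigma> (zip bs ms)) ` MS (length bs))" for bs
  have \<sigma>I: "\<sigma> s \<in> I" for s using w unfolding H_I_winning_def H_I_strategy_def by blast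
  have "G_I_winning I \<sigma>G"
    unfolding G_I_winning_def G_I_strategy_def
  proof (intro conjI allI impI)
    fix s show "\<sigma>G s \<in> I" unfolding \<sigma>G_def
      by (rule ideal_Union[OF id]) (use finMS \<sigma>I in auto)
  next
    fix b :: "nat \<Rightarrow> nat" assume bl: "\<forall>n. b n \<notin> \<sigma>G (pref b n)"
    show "range b \<notin> Iplus I"
    proof
      assume "range b \<in> Iplus I"
      then have "range b \<in> range F" using rF by simp
      then obtain x where x: "F x = range b" by (metis imageE)
      define ns where "ns i = (\<Sum>j<Suc i. Suc (x j))" for i
      have nsS: "ns (Suc i) = ns i + Suc (x (Suc i))" for i unfolding ns_def by simp
      have sm: "strict_mono ns" unfolding strict_mono_Suc_iff using nsS by simp
      have xns: "x i < ns i" for i unfolding ns_def by simp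
      define g where "g n = (if n \<in> range ns then int (x (inv ns n)) else -1)" for n
      have inj: "inj ns" using sm strict_mono_imp_inj_on by blast
      have gns: "g (ns i) = int (x i)" for i unfolding g_def using inj by simp
      have S: "{n. g n \<noteq> -1} = range ns" unfolding g_def by auto
      have inf: "infinite {n. g n \<noteq> -1}" using S inj by (simp add: range_inj_infinite)
      have en: "enumerate {n. g n \<noteq> -1} i = ns i" for i
        using strict_mono_range_eq[OF strict_mono_enumerate[OF inf] sm] range_enumerate[OF inf] S by simp
      have tg: "tilde g = x" unfolding tilde_def using en gns by (simp add: fun_eq_iff)
      define bm where "bm n = (b n, g n)" for n
      have gl: "-1 \<le> g n \<and> g n < int n" for n
      proof (cases "n \<in> range ns")
        case True then obtain i where "n = ns i" by blast
        then show ?thesis using gns xns[of i] by simp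
      next
        case False then show ?thesis unfolding g_def by simp
      qed
      have gMS: "pref g n \<in> MS n" for n unfolding MS_def using gl by (simp add: pref_def)
      have pbm: "pref bm n = zip (pref b n) (pref g n)" for n
        by (rule nth_equalityI) (simp_all add: pref_def bm_def)
      have "H_legal (\<sigma> (pref bm n)) n (bm n)" for n
      proof -
        have "\<sigma> (pref bm n) \<subseteq> \<sigma>G (pref b n)" unfolding \<sigma>G_def pbm using gMS[of n] by auto
        then have "b n \<notin> \<sigma> (pref bm n)" using bl by blast
        then show ?thesis unfolding H_legal_def bm_def using gl by simp
      qed
      then have "\<not> H_II_wins F bm" using w unfolding H_I_winning_def by blast
      moreover have "H_II_wins F bm" unfolding H_II_wins_def bm_def using inf tg x by simp
      ultimately show False by simp
    qed
  qed
  then show ?thesis by blast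
qed

lemma G_II_from_H:
  assumes rF: "range F = Iplus I" and w: "H_II_winning I F \<tau>"
  shows "G_II_winning I (\<lambda>As. fst (\<tau> As))"
  unfolding G_II_winning_def G_II_strategy_def
proof (intro conjI allI impI)
  fix As :: "nat set list" assume "As \<noteq> []" "set As \<subseteq> I"
  then have "H_legal (last As) (length As - 1) (\<tau> As)"
    using w unfolding H_II_winning_def H_II_strategy_def by blast
  then show "fst (\<tau> As) \<notin> last As" unfolding H_legal_def by simp
next
  fix A :: "nat \<Rightarrow> nat set" assume "\<forall>n. A n \<in> I"
  then have "H_II_wins F (\<lambda>n. \<tau> (pref A (Suc n)))" using w unfolding H_II_winning_def by blast
  then have e: "F (tilde (\<lambda>n. snd (\<tau> (pref A (Suc n))))) = range (\<lambda>n. fst (\<tau> (pref A (Suc n))))"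
    unfolding H_II_wins_def by simp
  have "F (tilde (\<lambda>n. snd (\<tau> (pref A (Suc n))))) \<in> Iplus I" using rF by blast
  then show "range (\<lambda>n. fst (\<tau> (pref A (Suc n)))) \<in> Iplus I" using e by simp
qed

theorem proposition49:
  fixes I :: "nat set set" and F :: "(nat \<Rightarrow> nat) \<Rightarrow> nat set"
  assumes "ideal_on_omega I" and "coanalytic_P I"
    and "cont_into_P F" and "range F = Iplus I"
  shows "H_Cat_determined I F \<and> G_Cat_determined I"
proof -
  have H: "H_Cat_determined I F" using H_det[OF assms(1) assms(3)] .
  have "G_Cat_determined I"
    using H unfolding H_Cat_determined_def G_Cat_determined_def
    using G_I_from_H[OF assms(1) assms(4)] G_II_from_H[OF assms(4)] by blast
  with H show ?thesis by simp
qed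


end
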